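(* For every choice of environment function $Env()$, ESAdapt under the reward function $Rew_{CodeB}()$ is unsolvable: there is no algorithm (Turing machine), regardless of running time or memory, that produces the correct output for every instance.
   Context: Model. Let $X=\{x_1,\dots,x_{|X|}\}$ be Boolean variables and $O$ a finite output set. Software system requirements are a finite set $R$ of pairs $(i,o)$, where $i$ is a truth assignment to $X$ and $o\in O$. Interfaces and components follow the Dana runtime component model: an interface is a set of function prototypes (function name, return type, parameter types) together with a set of typed transfer fields; a component provides one or more interfaces and requires zero or more interfaces, and contains code (in a Dana-like imperative language with assignments, conditionals, loops, arrays, function calls and an output statement; this language can simulate any Turing machine) implementing every function of its provided interfaces; this code may call functions and use transfer fields of its required interfaces. $L_{int}$ and $L_{comp}$ are finite libraries of interfaces and components. Given a base component $c\in L_{comp}$ implementing a function main, a valid component-based software system $S$ based on $c$ is obtained by choosing, for each required interface of $c$, a component of $L_{comp}$ providing it, and recursively for each required interface of every chosen component; separate copies of a component are used for separate required-interface occurrences, and when a component providing several interfaces implements one of them, only a reduced copy containing that interface's code is used. Its component wiring tree has root $c$, vertices the chosen component copies, arcs labelled by the implemented interfaces; no component label may occur twice on a root-to-leaf path. $S$ is working relative to $R$ if for every $(i,o)\in R$, running $S$ on input $i$ outputs $o$. An environment function $Env()$ maps a system to events/metric values and is computable in polynomial time. $Rew_{CodeB}(S)$ is the total number of lines of code in the interfaces and components comprising $S$. Problem ESAdapt under $Rew_{CodeB}()$: Input: $R$, $L_{int}$, $L_{comp}$, a working system $S$ based on a component $c\in L_{comp}$ relative to $R$, $L_{int}$, $L_{comp}$,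 and $Env()$. Output: a working system $S'$ based on $c$ relative to $L_{int},L_{comp},R$ having the smallest value of $Rew_{CodeB}(S')$ over all working systems based on $c$ relative to $L_{int},L_{comp},R$. *)

theory Defs
  imports Main
begin

type_synonym name = nat

datatype ty = TInt | TBool | TVoid | TArr ty

section \<open>A Dana-like imperative language\<close>

text \<open>Booleans are represented by integers (0 = false).
  ReqField k f reads transfer field f of the k-th required interface of the
  component; ProvField f reads transfer field f of the interface the component
  copy provides.  Input k reads the value (0/1) of the Boolean input variable x_(k+1).\<close>
datatype aexp =
    Num int
  | Var name
  | Input nat
  | Plus aexp aexp
  | Sub aexp aexp
  | Mult aexp aexp
  | Less aexp aexp
  | Equal aexp aexp
  | ArrGet name aexp
  | ReqField nat name
  | ProvField name

text \<open>Statements.  CallF x k f args assigns to x the result of calling function f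
  of the k-th required interface; Output e is the output statement.\<close>
datatype com =
    Skip
  | Assign name aexp
  | ArrSet name aexp aexp
  | SetReqField nat name aexp
  | SetProvField name aexp
  | Seq com com
  | If aexp com com
  | While aexp com
  | CallF name nat name "aexp list"
  | Output aexp

datatype fdef = FDef (fd_name: name) (fd_params: "name list") (fd_body: com) (fd_ret: aexp)

datatype proto = Proto (pr_name: name) (pr_ret: ty) (pr_params: "ty list")

datatype iface = Iface (if_name: name) (if_protos: "proto list") (if_fields: "(name \<times> ty) list")

datatype comp = Comp (c_name: name) (c_provides: "name list") (c_requires: "name list")
  (c_funs: "fdef list")

text \<open>Component wiring tree: a vertex is a component copy; the k-th child implements
  the k-th required interface of its parent (the arc label).\<close>
datatype wtree = WNode (w_comp: comp) (w_kids: "wtree list")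

definition iface_of :: "iface list \<Rightarrow> name \<Rightarrow> iface" where
  "iface_of L n = (case find (\<lambda>I. if_name I = n) L of Some I \<Rightarrow> I | None \<Rightarrow> Iface n [] [])"

text \<open>Code of a component copy: the full code for the root (None), and the reduced
  copy containing only the functions of interface n when it implements n (Some n).\<close>
definition funs_of :: "iface list \<Rightarrow> name option \<Rightarrow> comp \<Rightarrow> fdef list" where
  "funs_of L io c = (case io of None \<Rightarrow> c_funs c
     | Some n \<Rightarrow> filter (\<lambda>d. fd_name d \<in> set (map pr_name (if_protos (iface_of L n)))) (c_funs c))"

definition wf_libs :: "iface list \<Rightarrow> comp list \<Rightarrow> bool" where
  "wf_libs Li Lc \<longleftrightarrow>
     distinct (map if_name Li) \<and>
     (\<forall>c \<in> set Lc. c_provides c \<noteq> [] \<and>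
        set (c_provides c) \<subseteq> set (map if_name Li) \<and>
        set (c_requires c) \<subseteq> set (map if_name Li) \<and>
        (\<forall>n \<in> set (c_provides c). \<forall>pr \<in> set (if_protos (iface_of Li n)).
           \<exists>d \<in> set (c_funs c). fd_name d = pr_name pr \<and> length (fd_params d) = length (pr_params pr)))"

text \<open>validT Lc vis io t: t is a valid wiring (sub)tree whose root implements the
  interface io (None for the base component), using components of Lc, and no
  component label of t occurs in vis (the labels above it on the path) or twice on
  a root-to-leaf path.\<close>
fun validT :: "comp list \<Rightarrow> comp list \<Rightarrow> name option \<Rightarrow> wtree \<Rightarrow> bool"
and validTs :: "comp list \<Rightarrow> comp list \<Rightarrow> name list \<Rightarrow> wtree list \<Rightarrow> bool" where
  "validT Lc vis io (WNode c ks) \<longleftrightarrow>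
     c \<in> set Lc \<and> c \<notin> set vis \<and>
     (case io of None \<Rightarrow> True | Some n \<Rightarrow> n \<in> set (c_provides c)) \<and>
     validTs Lc (c # vis) (c_requires c) ks"
| "validTs Lc vis [] [] = True"
| "validTs Lc vis (n # ns) (t # ts) \<longleftrightarrow> validT Lc vis (Some n) t \<and> validTs Lc vis ns ts"
| "validTs Lc vis (n # ns) [] = False"
| "validTs Lc vis [] (t # ts) = False"

definition system_based :: "comp list \<Rightarrow> comp \<Rightarrow> wtree \<Rightarrow> bool" where
  "system_based Lc c S \<longleftrightarrow> w_comp S = c \<and> validT Lc [] None S"

text \<open>State: scalar locals, array locals, transfer field store (indexed by the path
  of the providing component copy in the wiring tree), output sequence.\<close>
type_synonym state = "(name \<Rightarrow> int) \<times> (name \<Rightarrow> int \<Rightarrow> int) \<times> (nat list \<Rightarrow> name \<Rightarrow> int) \<times> int list"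

fun aval :: "bool list \<Rightarrow> nat list \<Rightarrow> state \<Rightarrow> aexp \<Rightarrow> int" where
  "aval i p s (Num n) = n"
| "aval i p (sc, ar, F, os) (Var x) = sc x"
| "aval i p s (Input k) = (if k < length i \<and> i ! k then 1 else 0)"
| "aval i p s (Plus a b) = aval i p s a + aval i p s b"
| "aval i p s (Sub a b) = aval i p s a - aval i p s b"
| "aval i p s (Mult a b) = aval i p s a * aval i p s b"
| "aval i p s (Less a b) = (if aval i p s a < aval i p s b then 1 else 0)"
| "aval i p s (Equal a b) = (if aval i p s a = aval i p s b then 1 else 0)"
| "aval i p (sc, ar, F, os) (ArrGet x a) = ar x (aval i p (sc, ar, F, os) a)"
| "aval i p (sc, ar, F, os) (ReqField k f) = F (p @ [k]) f"
| "aval i p (sc, ar, F, os) (ProvField f) = F p f"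

definition bind_params :: "name list \<Rightarrow> int list \<Rightarrow> name \<Rightarrow> int" where
  "bind_params ps vs = foldr (\<lambda>(x, v) s. s(x := v)) (zip ps vs) (\<lambda>_. 0)"

text \<open>exec L i p io t c s s': executing statement c in the component copy at vertex t
  (at path p, implementing interface io) on input i transforms s into s'.\<close>
inductive exec :: "iface list \<Rightarrow> bool list \<Rightarrow> nat list \<Rightarrow> name option \<Rightarrow> wtree \<Rightarrow> com
    \<Rightarrow> state \<Rightarrow> state \<Rightarrow> bool" where
  ExSkip: "exec L i p io t Skip s s"
| ExAssign: "s = (sc, ar, F, os) \<Longrightarrow>
    exec L i p io t (Assign x e) s (sc(x := aval i p s e), ar, F, os)"
| ExArrSet: "s = (sc, ar, F, os) \<Longrightarrow>
    exec L i p io t (ArrSet x e1 e2) s (sc, ar(x := (ar x)(aval i p s e1 := aval i p s e2)), F, os)"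
| ExReqF: "s = (sc, ar, F, os) \<Longrightarrow>
    exec L i p io t (SetReqField k f e) s (sc, ar, F((p @ [k]) := (F (p @ [k]))(f := aval i p s e)), os)"
| ExProvF: "s = (sc, ar, F, os) \<Longrightarrow>
    exec L i p io t (SetProvField f e) s (sc, ar, F(p := (F p)(f := aval i p s e)), os)"
| ExSeq: "exec L i p io t c1 s s1 \<Longrightarrow> exec L i p io t c2 s1 s2 \<Longrightarrow>
    exec L i p io t (Seq c1 c2) s s2"
| ExIfT: "aval i p s e \<noteq> 0 \<Longrightarrow> exec L i p io t c1 s s' \<Longrightarrow> exec L i p io t (If e c1 c2) s s'"
| ExIfF: "aval i p s e = 0 \<Longrightarrow> exec L i p io t c2 s s' \<Longrightarrow> exec L i p io t (If e c1 c2) s s'"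
| ExWhileF: "aval i p s e = 0 \<Longrightarrow> exec L i p io t (While e c) s s"
| ExWhileT: "aval i p s e \<noteq> 0 \<Longrightarrow> exec L i p io t c s s1 \<Longrightarrow>
    exec L i p io t (While e c) s1 s2 \<Longrightarrow> exec L i p io t (While e c) s s2"
| ExCall: "s = (sc, ar, F, os) \<Longrightarrow> t = WNode c ks \<Longrightarrow>
    k < length ks \<Longrightarrow> k < length (c_requires c) \<Longrightarrow> n = c_requires c ! k \<Longrightarrow>
    find (\<lambda>d. fd_name d = f) (funs_of L (Some n) (w_comp (ks ! k))) = Some (FDef f ps body re) \<Longrightarrow>
    length ps = length args \<Longrightarrow>
    exec L i (p @ [k]) (Some n) (ks ! k) body
      (bind_params ps (map (aval i p s) args), (\<lambda>_ _. 0), F, os) s1 \<Longrightarrow>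
    s1 = (sc1, ar1, F1, os1) \<Longrightarrow>
    exec L i p io t (CallF x k f args) s (sc(x := aval i (p @ [k]) s1 re), ar, F1, os1)"
| ExOut: "s = (sc, ar, F, os) \<Longrightarrow>
    exec L i p io t (Output e) s (sc, ar, F, os @ [aval i p s e])"

definition main_name :: name where "main_name = 0"

definition runs_output :: "iface list \<Rightarrow> wtree \<Rightarrow> bool list \<Rightarrow> int \<Rightarrow> bool" where
  "runs_output L S i out \<longleftrightarrow>
     (\<exists>ps body re s'. find (\<lambda>d. fd_name d = main_name) (c_funs (w_comp S)) = Some (FDef main_name ps body re) \<and>
        exec L i [] None S body ((\<lambda>_. 0), (\<lambda>_ _. 0), (\<lambda>_ _. 0), []) s' \<and>
        snd (snd (snd s')) = [out])"

definition working :: "(bool list \<times> int) list \<Rightarrow> iface list \<Rightarrow> wtree \<Rightarrow> bool" where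
  "working R L S \<longleftrightarrow> (\<forall>(i, out) \<in> set R. runs_output L S i out)"

fun loc_com :: "com \<Rightarrow> nat" where
  "loc_com (Seq c1 c2) = loc_com c1 + loc_com c2"
| "loc_com (If e c1 c2) = 2 + loc_com c1 + loc_com c2"
| "loc_com (While e c) = 1 + loc_com c"
| "loc_com c = 1"

definition loc_fdef :: "fdef \<Rightarrow> nat" where
  "loc_fdef d = 2 + loc_com (fd_body d)"

definition loc_iface :: "iface \<Rightarrow> nat" where
  "loc_iface I = 1 + length (if_protos I) + length (if_fields I)"

definition loc_copy :: "iface list \<Rightarrow> name option \<Rightarrow> comp \<Rightarrow> nat" where
  "loc_copy L io c = 1 + length (c_requires c) + sum_list (map loc_fdef (funs_of L io c))"

text \<open>Rew_CodeB: lines of code of all component copies (vertices) and of the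
  interfaces labelling the arcs of the wiring tree.\<close>
fun codeB :: "iface list \<Rightarrow> name option \<Rightarrow> wtree \<Rightarrow> nat"
and codeBs :: "iface list \<Rightarrow> name list \<Rightarrow> wtree list \<Rightarrow> nat" where
  "codeB L io (WNode c ks) = loc_copy L io c + codeBs L (c_requires c) ks"
| "codeBs L (n # ns) (t # ts) = loc_iface (iface_of L n) + codeB L (Some n) t + codeBs L ns ts"
| "codeBs L [] ts = 0"
| "codeBs L ns [] = 0"

definition Rew_CodeB :: "iface list \<Rightarrow> wtree \<Rightarrow> nat" where
  "Rew_CodeB L S = codeB L None S"

definition esadapt_instance :: "(bool list \<times> int) list \<Rightarrow> iface list \<Rightarrow> comp list \<Rightarrow> wtree \<Rightarrow> bool" where
  "esadapt_instance R Li Lc S \<longleftrightarrow>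
     wf_libs Li Lc \<and>
     (\<exists>nX. \<forall>(i, out) \<in> set R. length i = nX) \<and>
     system_based Lc (w_comp S) S \<and> working R Li S"

definition esadapt_codeB_solution :: "(bool list \<times> int) list \<Rightarrow> iface list \<Rightarrow> comp list \<Rightarrow> wtree \<Rightarrow> wtree \<Rightarrow> bool" where
  "esadapt_codeB_solution R Li Lc S S' \<longleftrightarrow>
     system_based Lc (w_comp S) S' \<and> working R Li S' \<and>
     (\<forall>S''. system_based Lc (w_comp S) S'' \<and> working R Li S'' \<longrightarrow> Rew_CodeB Li S' \<le> Rew_CodeB Li S'')"

section \<open>Model of algorithms: the WHILE language over binary trees (Jones)\<close>

datatype D = DNil | DCons D D

datatype wexp = WVar nat | WNilE | WConsE wexp wexp | WHd wexp | WTl wexp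

datatype wcom = WAsg nat wexp | WSeq wcom wcom | WWhile wexp wcom

fun wval :: "(nat \<Rightarrow> D) \<Rightarrow> wexp \<Rightarrow> D" where
  "wval \<sigma> (WVar x) = \<sigma> x"
| "wval \<sigma> WNilE = DNil"
| "wval \<sigma> (WConsE a b) = DCons (wval \<sigma> a) (wval \<sigma> b)"
| "wval \<sigma> (WHd a) = (case wval \<sigma> a of DCons l r \<Rightarrow> l | DNil \<Rightarrow> DNil)"
| "wval \<sigma> (WTl a) = (case wval \<sigma> a of DCons l r \<Rightarrow> r | DNil \<Rightarrow> DNil)"

inductive wexec :: "wcom \<Rightarrow> (nat \<Rightarrow> D) \<Rightarrow> (nat \<Rightarrow> D) \<Rightarrow> bool" where
  "wexec (WAsg x e) \<sigma> (\<sigma>(x := wval \<sigma> e))"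
| "wexec c1 \<sigma> \<sigma>1 \<Longrightarrow> wexec c2 \<sigma>1 \<sigma>2 \<Longrightarrow> wexec (WSeq c1 c2) \<sigma> \<sigma>2"
| "wval \<sigma> e = DNil \<Longrightarrow> wexec (WWhile e c) \<sigma> \<sigma>"
| "wval \<sigma> e \<noteq> DNil \<Longrightarrow> wexec c \<sigma> \<sigma>1 \<Longrightarrow> wexec (WWhile e c) \<sigma>1 \<sigma>2 \<Longrightarrow> wexec (WWhile e c) \<sigma> \<sigma>2"

definition wcomputes :: "wcom \<Rightarrow> D \<Rightarrow> D \<Rightarrow> bool" where
  "wcomputes P x y \<longleftrightarrow> (\<exists>\<sigma>'. wexec P (\<lambda>v. if v = 0 then x else DNil) \<sigma>' \<and> \<sigma>' 1 = y)"

section \<open>Encoding of instances and systems as binary trees\<close>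

fun enc_nat :: "nat \<Rightarrow> D" where
  "enc_nat 0 = DNil"
| "enc_nat (Suc n) = DCons DNil (enc_nat n)"

definition enc_bool :: "bool \<Rightarrow> D" where
  "enc_bool b = (if b then DCons DNil DNil else DNil)"

definition enc_int :: "int \<Rightarrow> D" where
  "enc_int z = DCons (enc_bool (0 \<le> z)) (enc_nat (nat \<bar>z\<bar>))"

definition enc_dl :: "D list \<Rightarrow> D" where
  "enc_dl ds = foldr DCons ds DNil"

definition tag :: "nat \<Rightarrow> D list \<Rightarrow> D" where
  "tag n ds = DCons (enc_nat n) (enc_dl ds)"

fun enc_ty :: "ty \<Rightarrow> D" where
  "enc_ty TInt = tag 0 []"
| "enc_ty TBool = tag 1 []"
| "enc_ty TVoid = tag 2 []"
| "enc_ty (TArr t) = tag 3 [enc_ty t]"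

fun enc_aexp :: "aexp \<Rightarrow> D" where
  "enc_aexp (Num n) = tag 0 [enc_int n]"
| "enc_aexp (Var x) = tag 1 [enc_nat x]"
| "enc_aexp (Input k) = tag 2 [enc_nat k]"
| "enc_aexp (Plus a b) = tag 3 [enc_aexp a, enc_aexp b]"
| "enc_aexp (Sub a b) = tag 4 [enc_aexp a, enc_aexp b]"
| "enc_aexp (Mult a b) = tag 5 [enc_aexp a, enc_aexp b]"
| "enc_aexp (Less a b) = tag 6 [enc_aexp a, enc_aexp b]"
| "enc_aexp (Equal a b) = tag 7 [enc_aexp a, enc_aexp b]"
| "enc_aexp (ArrGet x a) = tag 8 [enc_nat x, enc_aexp a]"
| "enc_aexp (ReqField k f) = tag 9 [enc_nat k, enc_nat f]"
| "enc_aexp (ProvField f) = tag 10 [enc_nat f]"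

fun enc_com :: "com \<Rightarrow> D" where
  "enc_com Skip = tag 0 []"
| "enc_com (Assign x e) = tag 1 [enc_nat x, enc_aexp e]"
| "enc_com (ArrSet x e1 e2) = tag 2 [enc_nat x, enc_aexp e1, enc_aexp e2]"
| "enc_com (SetReqField k f e) = tag 3 [enc_nat k, enc_nat f, enc_aexp e]"
| "enc_com (SetProvField f e) = tag 4 [enc_nat f, enc_aexp e]"
| "enc_com (Seq c1 c2) = tag 5 [enc_com c1, enc_com c2]"
| "enc_com (If e c1 c2) = tag 6 [enc_aexp e, enc_com c1, enc_com c2]"
| "enc_com (While e c) = tag 7 [enc_aexp e, enc_com c]"
| "enc_com (CallF x k f args) = tag 8 [enc_nat x, enc_nat k, enc_nat f, enc_dl (map enc_aexp args)]"
| "enc_com (Output e) = tag 9 [enc_aexp e]"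

fun enc_fdef :: "fdef \<Rightarrow> D" where
  "enc_fdef (FDef f ps body re) = tag 0 [enc_nat f, enc_dl (map enc_nat ps), enc_com body, enc_aexp re]"

fun enc_proto :: "proto \<Rightarrow> D" where
  "enc_proto (Proto f r ps) = tag 0 [enc_nat f, enc_ty r, enc_dl (map enc_ty ps)]"

fun enc_iface :: "iface \<Rightarrow> D" where
  "enc_iface (Iface n prs fs) = tag 0 [enc_nat n, enc_dl (map enc_proto prs),
     enc_dl (map (\<lambda>(f, t). DCons (enc_nat f) (enc_ty t)) fs)]"

fun enc_comp :: "comp \<Rightarrow> D" where
  "enc_comp (Comp n pv rq fs) = tag 0 [enc_nat n, enc_dl (map enc_nat pv), enc_dl (map enc_nat rq),
     enc_dl (map enc_fdef fs)]"

fun enc_wtree :: "wtree \<Rightarrow> D" where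
  "enc_wtree (WNode c ks) = tag 0 [enc_comp c, enc_dl (map enc_wtree ks)]"

definition enc_req :: "(bool list \<times> int) list \<Rightarrow> D" where
  "enc_req R = enc_dl (map (\<lambda>(i, out). DCons (enc_dl (map enc_bool i)) (enc_int out)) R)"

definition enc_instance :: "(bool list \<times> int) list \<Rightarrow> iface list \<Rightarrow> comp list \<Rightarrow> wtree \<Rightarrow> D" where
  "enc_instance R Li Lc S = tag 0 [enc_req R, enc_dl (map enc_iface Li), enc_dl (map enc_comp Lc), enc_wtree S]"

definition solves_ESAdapt_codeB :: "wcom \<Rightarrow> bool" where
  "solves_ESAdapt_codeB P \<longleftrightarrow>
     (\<forall>R Li Lc S. esadapt_instance R Li Lc S \<longrightarrow>
        (\<exists>S'. esadapt_codeB_solution R Li Lc S S' \<and> wcomputes P (enc_instance R Li Lc S) (enc_wtree S')))"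

end

theory Submission
  imports Defs
begin


section \<open>Coding binary trees as integers\<close>

fun code :: "D \<Rightarrow> int" where
  "code DNil = 0"
| "code (DCons a b) = (code a + code b) * (code a + code b) + code b + 1"

lemma code_nonneg: "0 \<le> code t"
  by (induction t) auto

lemma code_pos: "code (DCons a b) > 0"
  using code_nonneg[of a] code_nonneg[of b] by (simp add: add_nonneg_pos)

lemma pair_inj_aux:
  fixes a b c d :: int
  assumes "0 \<le> a" "0 \<le> b" "0 \<le> c" "0 \<le> d" "a + b < c + d"
  shows "(a+b)*(a+b) + b < (c+d)*(c+d) + d"
proof -
  have "(a+b)*(a+b) + b \<le> (a+b)*(a+b) + (a+b)" using assms by simp
  also have "\<dots> < (a+b+1)*(a+b+1)" using assms by (simp add: algebra_simps)
  also have "\<dots> \<le> (c+d)*(c+d)" using assms by (intro mult_mono) auto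
  also have "\<dots> \<le> (c+d)*(c+d) + d" using assms by simp
  finally show ?thesis .
qed

lemma pair_inj:
  fixes a b c d :: int
  assumes "0 \<le> a" "0 \<le> b" "0 \<le> c" "0 \<le> d"
    and "(a+b)*(a+b) + b = (c+d)*(c+d) + d"
  shows "a = c \<and> b = d"
proof -
  have "a + b = c + d"
    using pair_inj_aux[of a b c d] pair_inj_aux[of c d a b] assms by fastforce
  with assms show ?thesis by simp
qed

lemma code_inj: "code s = code t \<Longrightarrow> s = t"
proof (induction s arbitrary: t)
  case DNil
  then show ?case by (cases t) (metis code.simps(1) code_pos less_irrefl)+
next
  case (DCons a b)
  then show ?case
  proof (cases t)
    case DNil then show ?thesis using DCons.prems code_pos[of a b] by simp
  next
    case (DCons c d)
    have "code a = code c \<and> code b = code d"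
      by (rule pair_inj) (use DCons.prems \<open>t = DCons c d\<close> code_nonneg in auto)
    then show ?thesis using DCons.IH \<open>t = DCons c d\<close> by auto
  qed
qed

fun dhd :: "D \<Rightarrow> D" where "dhd (DCons l r) = l" | "dhd DNil = DNil"
fun dtl :: "D \<Rightarrow> D" where "dtl (DCons l r) = r" | "dtl DNil = DNil"

section \<open>Pure fragment of the Dana language\<close>

fun pure :: "aexp \<Rightarrow> bool" where
  "pure (Num n) = True"
| "pure (Var x) = True"
| "pure (Plus a b) = (pure a \<and> pure b)"
| "pure (Sub a b) = (pure a \<and> pure b)"
| "pure (Mult a b) = (pure a \<and> pure b)"
| "pure (Less a b) = (pure a \<and> pure b)"
| "pure (Equal a b) = (pure a \<and> pure b)"
| "pure _ = False"

fun ev :: "(name \<Rightarrow> int) \<Rightarrow> aexp \<Rightarrow> int" where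
  "ev s (Num n) = n"
| "ev s (Var x) = s x"
| "ev s (Plus a b) = ev s a + ev s b"
| "ev s (Sub a b) = ev s a - ev s b"
| "ev s (Mult a b) = ev s a * ev s b"
| "ev s (Less a b) = (if ev s a < ev s b then 1 else 0)"
| "ev s (Equal a b) = (if ev s a = ev s b then 1 else 0)"
| "ev s _ = 0"

lemma aval_pure: "pure e \<Longrightarrow> aval i p (sc, ar, F, os) e = ev sc e"
  by (induction e) auto

inductive pexec :: "com \<Rightarrow> (name \<Rightarrow> int) \<Rightarrow> (name \<Rightarrow> int) \<Rightarrow> bool" where
  PSkip: "pexec Skip s s"
| PAssign: "pure e \<Longrightarrow> pexec (Assign x e) s (s(x := ev s e))"
| PSeq: "pexec c1 s s1 \<Longrightarrow> pexec c2 s1 s2 \<Longrightarrow> pexec (Seq c1 c2) s s2"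
| PIfT: "pure e \<Longrightarrow> ev s e \<noteq> 0 \<Longrightarrow> pexec c1 s s' \<Longrightarrow> pexec (If e c1 c2) s s'"
| PIfF: "pure e \<Longrightarrow> ev s e = 0 \<Longrightarrow> pexec c2 s s' \<Longrightarrow> pexec (If e c1 c2) s s'"
| PWhileF: "pure e \<Longrightarrow> ev s e = 0 \<Longrightarrow> pexec (While e c) s s"
| PWhileT: "pure e \<Longrightarrow> ev s e \<noteq> 0 \<Longrightarrow> pexec c s s1 \<Longrightarrow> pexec (While e c) s1 s2 \<Longrightarrow>
    pexec (While e c) s s2"

lemma PAssign': "pure e \<Longrightarrow> ev s e = v \<Longrightarrow> pexec (Assign x e) s (s(x := v))"
  using PAssign by metis

lemma pexec_exec: "pexec c s s' \<Longrightarrow> exec L i p io t c (s, ar, F, os) (s', ar, F, os)"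
proof (induction rule: pexec.induct)
  case (PSkip s) then show ?case by (rule ExSkip)
next
  case (PAssign e x s)
  then have eq: "aval i p (s, ar, F, os) e = ev s e" by (simp add: aval_pure)
  have "exec L i p io t (Assign x e) (s, ar, F, os) (s(x := aval i p (s, ar, F, os) e), ar, F, os)"
    by (rule ExAssign) (rule refl)
  then show ?case by (simp only: eq)
next
  case (PSeq c1 s s1 c2 s2) then show ?case by (intro ExSeq[OF PSeq.IH(1) PSeq.IH(2)])
next
  case (PIfT e s c1 s' c2)
  then have eq: "aval i p (s, ar, F, os) e \<noteq> 0" by (simp add: aval_pure)
  show ?case by (rule ExIfT[OF eq PIfT.IH])
next
  case (PIfF e s c2 s' c1)
  then have eq: "aval i p (s, ar, F, os) e = 0" by (simp add: aval_pure)
  show ?case by (rule ExIfF[OF eq PIfF.IH])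
next
  case (PWhileF e s c)
  then have eq: "aval i p (s, ar, F, os) e = 0" by (simp add: aval_pure)
  show ?case by (rule ExWhileF[OF eq])
next
  case (PWhileT e s c s1 s2)
  then have eq: "aval i p (s, ar, F, os) e \<noteq> 0" by (simp add: aval_pure)
  show ?case by (rule ExWhileT[OF eq PWhileT.IH(1) PWhileT.IH(2)])
qed

inductive_cases SkipE: "exec L i p io t Skip s s'"
inductive_cases AssignE: "exec L i p io t (Assign x e) s s'"
inductive_cases ArrSetE: "exec L i p io t (ArrSet x e1 e2) s s'"
inductive_cases ReqFE: "exec L i p io t (SetReqField k f e) s s'"
inductive_cases ProvFE: "exec L i p io t (SetProvField f e) s s'"
inductive_cases SeqE: "exec L i p io t (Seq c1 c2) s s'"
inductive_cases IfE: "exec L i p io t (If e c1 c2) s s'"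
inductive_cases WhileE: "exec L i p io t (While e c) s s'"
inductive_cases CallE: "exec L i p io t (CallF x k f args) s s'"
inductive_cases OutE: "exec L i p io t (Output e) s s'"

lemma exec_det: "exec L i p io t c s s1 \<Longrightarrow> exec L i p io t c s s2 \<Longrightarrow> s1 = s2"
proof (induction arbitrary: s2 rule: exec.induct)
  case (ExSkip L i p io t s) from ExSkip.prems show ?case by (rule SkipE) simp
next
  case ExAssign from ExAssign.prems show ?case by (rule AssignE) (use ExAssign.hyps in simp)
next
  case ExArrSet from ExArrSet.prems show ?case by (rule ArrSetE) (use ExArrSet.hyps in simp)
next
  case ExReqF from ExReqF.prems show ?case by (rule ReqFE) (use ExReqF.hyps in simp)
next
  case ExProvF from ExProvF.prems show ?case by (rule ProvFE) (use ExProvF.hyps in simp)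
next
  case (ExSeq L i p io t c1 s s1 c2 s2 s2')
  from ExSeq.prems obtain s1' where a: "exec L i p io t c1 s s1'" and b: "exec L i p io t c2 s1' s2'"
    by (rule SeqE)
  have "s1 = s1'" by (rule ExSeq.IH(1)[OF a])
  with b have "exec L i p io t c2 s1 s2'" by simp
  then show ?case by (rule ExSeq.IH(2))
next
  case (ExIfT i p s e L io t c1 s' c2 s2)
  from ExIfT.prems show ?case
  proof (rule IfE)
    assume "exec L i p io t c1 s s2" then show ?thesis by (rule ExIfT.IH)
  next
    assume "aval i p s e = 0" then show ?thesis using ExIfT.hyps(1) by contradiction
  qed
next
  case (ExIfF i p s e L io t c2 s' c1 s2)
  from ExIfF.prems show ?case
  proof (rule IfE)
    assume "aval i p s e \<noteq> 0" then show ?thesis using ExIfF.hyps(1) by contradiction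
  next
    assume "exec L i p io t c2 s s2" then show ?thesis by (rule ExIfF.IH)
  qed
next
  case (ExWhileF i p s e L io t c s2)
  from ExWhileF.prems show ?case
  proof (rule WhileE)
    assume "s2 = s" then show ?thesis by simp
  next
    assume "aval i p s e \<noteq> 0" then show ?thesis using ExWhileF.hyps(1) by contradiction
  qed
next
  case (ExWhileT i p s e L io t c s1 s2 s2')
  from ExWhileT.prems show ?case
  proof (rule WhileE)
    assume "aval i p s e = 0" then show ?thesis using ExWhileT.hyps(1) by contradiction
  next
    fix s1' assume "exec L i p io t c s s1'" "exec L i p io t (While e c) s1' s2'"
    moreover have "s1 = s1'" by (rule ExWhileT.IH(1)) fact
    ultimately have "exec L i p io t (While e c) s1 s2'" by simp
    then show ?thesis by (rule ExWhileT.IH(2))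
  qed
next
  case (ExCall s sc ar F os t c ks k n f L ps body re args i p s1 sc1 ar1 F1 os1 io x s2)
  note IH = ExCall.IH and H = ExCall.hyps
  from ExCall.prems show ?case
  proof (rule CallE)
    fix sc' ar' F' os' c' ks' ps' body' re' sc1' ar1' F1' os1'
    assume A: "t = WNode c' ks'" "s = (sc', ar', F', os')"
      "s2 = (sc'(x := aval i (p @ [k]) (sc1', ar1', F1', os1') re'), ar', F1', os1')"
      "k < length ks'" "k < length (c_requires c')"
      "find (\<lambda>d. fd_name d = f) (funs_of L (Some (c_requires c' ! k)) (w_comp (ks' ! k))) =
       Some (FDef f ps' body' re')"
      "length ps' = length args"
      "exec L i (p @ [k]) (Some (c_requires c' ! k)) (ks' ! k) body'
         (bind_params ps' (map (aval i p (sc', ar', F', os')) args), \<lambda>_ _. 0, F', os')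
         (sc1', ar1', F1', os1')"
    have e1: "sc' = sc" "ar' = ar" "F' = F" "os' = os" using A(2) H(1) by auto
    have e2: "c' = c" "ks' = ks" using A(1) H(2) by auto
    have "FDef f ps' body' re' = FDef f ps body re" using A(6) H(6) e2 H(5) by simp
    then have e3: "ps' = ps" "body' = body" "re' = re" by auto
    have X: "exec L i (p @ [k]) (Some n) (ks ! k) body
         (bind_params ps (map (aval i p s) args), \<lambda>_ _. 0, F, os) (sc1', ar1', F1', os1')"
      using A(8) unfolding e1 e2 e3 H(5)[symmetric] H(1) by assumption
    have "s1 = (sc1', ar1', F1', os1')" by (rule IH[OF X])
    then show ?thesis unfolding A(3) e1 e3 using H(1) H(9) by simp
  qed
next
  case (ExOut s sc ar F os L i p io t e s2)
  from ExOut.prems show ?case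
  proof (rule OutE)
    fix sc' ar' F' os'
    assume a: "s = (sc', ar', F', os')" "s2 = (sc', ar', F', os' @ [aval i p (sc', ar', F', os') e])"
    from a(1) ExOut.hyps(1) have eqs: "sc' = sc" "ar' = ar" "F' = F" "os' = os" by auto
    show ?thesis by (simp only: a(2) eqs ExOut.hyps(1))
  qed
qed



definition PAIRE :: "aexp \<Rightarrow> aexp \<Rightarrow> aexp" where
  "PAIRE x y = Plus (Plus (Mult (Plus x y) (Plus x y)) y) (Num 1)"

lemma pure_PAIRE[simp]: "pure (PAIRE x y) = (pure x \<and> pure y)"
  by (simp add: PAIRE_def)

lemma ev_PAIRE[simp]: "ev s (PAIRE x y) = (ev s x + ev s y) * (ev s x + ev s y) + ev s y + 1"
  by (simp add: PAIRE_def)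

definition unpW :: "name \<Rightarrow> name \<Rightarrow> com" where
  "unpW z q = While (Less (Mult (Plus (Var q) (Num 1)) (Plus (Var q) (Num 1))) (Var z))
      (Assign q (Plus (Var q) (Num 1)))"

definition unp :: "name \<Rightarrow> name \<Rightarrow> name \<Rightarrow> name \<Rightarrow> com" where
  "unp l r z q = If (Var z)
     (Seq (Assign q (Num 0)) (Seq (unpW z q)
       (Seq (Assign r (Sub (Sub (Var z) (Num 1)) (Mult (Var q) (Var q)))) (Assign l (Sub (Var q) (Var r))))))
     (Seq (Assign l (Num 0)) (Assign r (Num 0)))"

lemma unp_loop:
  fixes a b :: int
  assumes "0 \<le> a" "0 \<le> b" "z \<noteq> q"
  shows "s z = (a+b)*(a+b)+b+1 \<Longrightarrow> s q = a+b-int n \<Longrightarrow> 0 \<le> a+b-int n \<Longrightarrow>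
    pexec (unpW z q) s (s(q := a+b))"
proof (induction n arbitrary: s)
  case 0
  have "\<not> (a+b+1)*(a+b+1) < (a+b)*(a+b)+b+1" using assms by (simp add: algebra_simps)
  then have "pexec (unpW z q) s s"
    unfolding unpW_def by (intro PWhileF) (use 0 in auto)
  moreover have "s(q := a+b) = s" using 0 by auto
  ultimately show ?case by simp
next
  case (Suc n)
  let ?s = "s(q := s q + 1)"
  have le: "(s q + 1) * (s q + 1) \<le> (a+b)*(a+b)"
    using Suc.prems by (intro mult_mono) auto
  have cond: "(s q + 1) * (s q + 1) < s z" using le Suc.prems assms by simp
  have "pexec (unpW z q) ?s (?s(q := a+b))"
    by (rule Suc.IH) (use Suc.prems assms in auto)
  moreover have "?s(q := a+b) = s(q := a+b)" by simp
  ultimately have W: "pexec (unpW z q) ?s (s(q := a+b))" by simp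
  have A: "pexec (Assign q (Plus (Var q) (Num 1))) s ?s"
    by (rule PAssign') auto
  show ?case
    unfolding unpW_def by (rule PWhileT[OF _ _ A W[unfolded unpW_def]]) (simp_all add: cond)
qed

lemma unp_ok:
  assumes "s z = code t" "distinct [l, r, z, q]"
  shows "\<exists>s'. pexec (unp l r z q) s s' \<and> s' l = code (dhd t) \<and> s' r = code (dtl t) \<and>
    (\<forall>n. n \<noteq> l \<and> n \<noteq> r \<and> n \<noteq> q \<longrightarrow> s' n = s n)"
proof (cases t)
  case DNil
  let ?s = "s(l := 0, r := 0)"
  have a1: "pexec (Assign l (Num 0)) s (s(l := 0))" by (rule PAssign') auto
  have a2: "pexec (Assign r (Num 0)) (s(l := 0)) ?s" by (rule PAssign') auto
  have "pexec (unp l r z q) s ?s"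
    unfolding unp_def using assms DNil
    by (intro PIfF PSeq[OF a1 a2]) auto
  then show ?thesis using assms DNil by (intro exI[of _ ?s]) auto
next
  case (DCons x y)
  define a where "a = code x"
  define b where "b = code y"
  have ab: "0 \<le> a" "0 \<le> b" using code_nonneg a_def b_def by auto
  have sz: "s z = (a+b)*(a+b)+b+1" using assms DCons a_def b_def by simp
  let ?s1 = "s(q := 0)"
  let ?s2 = "s(q := a+b)"
  let ?s3 = "?s2(r := b)"
  let ?s4 = "?s3(l := a)"
  have 1: "pexec (Assign q (Num 0)) s ?s1" by (rule PAssign') auto
  have 2: "pexec (unpW z q) ?s1 (?s1(q := a+b))"
    by (rule unp_loop[where n = "nat (a+b)"]) (use ab assms sz in auto)
  have 3: "pexec (Assign r (Sub (Sub (Var z) (Num 1)) (Mult (Var q) (Var q)))) ?s2 ?s3"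
    by (rule PAssign') (use assms sz in \<open>auto simp: algebra_simps\<close>)
  have 4: "pexec (Assign l (Sub (Var q) (Var r))) ?s3 ?s4"
    by (rule PAssign') (use assms in auto)
  have "pexec (unp l r z q) s ?s4"
  proof -
    have "?s1(q := a+b) = ?s2" by simp
    then have 2: "pexec (unpW z q) ?s1 ?s2" using 2 by metis
    have "0 \<le> (a+b)*(a+b)" by simp
    then have "s z > 0" using sz ab by linarith
    then have "ev s (Var z) \<noteq> 0" by simp
    then show ?thesis unfolding unp_def
      by (intro PIfT PSeq[OF 1] PSeq[OF 2] PSeq[OF 3 4]) auto
  qed
  then show ?thesis using assms DCons a_def b_def by (intro exI[of _ ?s4]) auto
qed



definition rep :: "(name \<Rightarrow> int) \<Rightarrow> (nat \<Rightarrow> D) \<Rightarrow> bool" where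
  "rep sc \<sigma> \<longleftrightarrow> (\<forall>x. sc (2*x) = code (\<sigma> x))"

fun cexp :: "wexp \<Rightarrow> nat \<Rightarrow> com" where
  "cexp (WVar x) d = Assign (2*d+1) (Var (2*x))"
| "cexp WNilE d = Assign (2*d+1) (Num 0)"
| "cexp (WConsE a b) d = Seq (cexp a (d+1)) (Seq (cexp b (d+2))
     (Assign (2*d+1) (PAIRE (Var (2*d+3)) (Var (2*d+5)))))"
| "cexp (WHd a) d = Seq (cexp a (d+1)) (unp (2*d+1) (2*d+5) (2*d+3) (2*d+7))"
| "cexp (WTl a) d = Seq (cexp a (d+1)) (unp (2*d+5) (2*d+1) (2*d+3) (2*d+7))"

lemma wval_hd: "wval \<sigma> (WHd a) = dhd (wval \<sigma> a)"
  by (cases "wval \<sigma> a") auto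

lemma wval_tl: "wval \<sigma> (WTl a) = dtl (wval \<sigma> a)"
  by (cases "wval \<sigma> a") auto

lemma rep_frame: "rep sc \<sigma> \<Longrightarrow> (\<forall>n. even n \<longrightarrow> sc' n = sc n) \<Longrightarrow> rep sc' \<sigma>"
  unfolding rep_def by simp

lemma cexp_ok:
  "rep sc \<sigma> \<Longrightarrow> \<exists>sc'. pexec (cexp e d) sc sc' \<and> sc' (2*d+1) = code (wval \<sigma> e) \<and>
     (\<forall>n. even n \<or> n < 2*d+1 \<longrightarrow> sc' n = sc n)"
proof (induction e arbitrary: d sc)
  case (WVar x)
  have P: "pexec (cexp (WVar x) d) sc (sc(2*d+1 := code (\<sigma> x)))"
    unfolding cexp.simps by (rule PAssign') (use WVar in \<open>auto simp: rep_def\<close>)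
  then show ?case by (intro exI[of _ "sc(2*d+1 := code (\<sigma> x))"] conjI[OF P]) auto
next
  case WNilE
  have P: "pexec (cexp WNilE d) sc (sc(2*d+1 := 0))"
    unfolding cexp.simps by (rule PAssign') auto
  then show ?case by (intro exI[of _ "sc(2*d+1 := 0)"] conjI[OF P]) auto
next
  case (WConsE a b)
  obtain s1 where s1: "pexec (cexp a (d+1)) sc s1" "s1 (2*(d+1)+1) = code (wval \<sigma> a)"
    "\<forall>n. even n \<or> n < 2*(d+1)+1 \<longrightarrow> s1 n = sc n"
    using WConsE.IH(1)[OF WConsE.prems] by blast
  have r1: "rep s1 \<sigma>" using rep_frame[OF WConsE.prems] s1(3) by simp
  obtain s2 where s2: "pexec (cexp b (d+2)) s1 s2" "s2 (2*(d+2)+1) = code (wval \<sigma> b)"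
    "\<forall>n. even n \<or> n < 2*(d+2)+1 \<longrightarrow> s2 n = s1 n"
    using WConsE.IH(2)[OF r1] by blast
  let ?s3 = "s2(2*d+1 := code (wval \<sigma> (WConsE a b)))"
  have e1: "2*(d+1)+1 = 2*d+3" "2*(d+2)+1 = 2*d+5" by simp_all
  have "s2 (2*d+3) = s1 (2*d+3)" using s2(3) unfolding e1 by simp
  then have a3: "s2 (2*d+3) = code (wval \<sigma> a)" using s1(2) unfolding e1 by simp
  have b3: "s2 (2*d+5) = code (wval \<sigma> b)" using s2(2) unfolding e1 by simp
  have p3: "pexec (Assign (2*d+1) (PAIRE (Var (2*d+3)) (Var (2*d+5)))) s2 ?s3"
    by (rule PAssign') (use a3 b3 in simp_all)
  have P: "pexec (cexp (WConsE a b) d) sc ?s3"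
    by (simp only: cexp.simps) (rule PSeq[OF s1(1) PSeq[OF s2(1) p3]])
  moreover have "\<forall>n. even n \<or> n < 2*d+1 \<longrightarrow> ?s3 n = sc n"
    using s1(3) s2(3) by auto
  ultimately show ?case by (intro exI[of _ ?s3] conjI[OF P]) auto
next
  case (WHd a)
  obtain s1 where s1: "pexec (cexp a (d+1)) sc s1" "s1 (2*(d+1)+1) = code (wval \<sigma> a)"
    "\<forall>n. even n \<or> n < 2*(d+1)+1 \<longrightarrow> s1 n = sc n"
    using WHd.IH[OF WHd.prems] by blast
  obtain s2 where s2: "pexec (unp (2*d+1) (2*d+5) (2*d+3) (2*d+7)) s1 s2"
    "s2 (2*d+1) = code (dhd (wval \<sigma> a))" "s2 (2*d+5) = code (dtl (wval \<sigma> a))"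
    "\<forall>n. n \<noteq> 2*d+1 \<and> n \<noteq> 2*d+5 \<and> n \<noteq> 2*d+7 \<longrightarrow> s2 n = s1 n"
  proof -
    have e1: "2*(d+1)+1 = 2*d+3" by simp
    have s1': "s1 (2*d+3) = code (wval \<sigma> a)" using s1(2) unfolding e1 .
    have "distinct [2*d+1, 2*d+5, 2*d+3, 2*d+7]" by simp
    from unp_ok[where s=s1 and z="2*d+3", OF s1' this] show ?thesis using that by blast
  qed
  have P: "pexec (cexp (WHd a) d) sc s2"
    by (simp only: cexp.simps) (rule PSeq[OF s1(1) s2(1)])
  moreover have "\<forall>n. even n \<or> n < 2*d+1 \<longrightarrow> s2 n = sc n"
  proof (intro allI impI)
    fix n assume h: "even n \<or> n < 2*d+1"
    then have "n \<noteq> 2*d+1 \<and> n \<noteq> 2*d+5 \<and> n \<noteq> 2*d+7" by auto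
    then have "s2 n = s1 n" using s2(4) by blast
    moreover have "even n \<or> n < 2*(d+1)+1" using h by auto
    then have "s1 n = sc n" using s1(3) by blast
    ultimately show "s2 n = sc n" by simp
  qed
  ultimately show ?case using s2(2) wval_hd by (intro exI[of _ s2] conjI[OF P]) auto
next
  case (WTl a)
  obtain s1 where s1: "pexec (cexp a (d+1)) sc s1" "s1 (2*(d+1)+1) = code (wval \<sigma> a)"
    "\<forall>n. even n \<or> n < 2*(d+1)+1 \<longrightarrow> s1 n = sc n"
    using WTl.IH[OF WTl.prems] by blast
  obtain s2 where s2: "pexec (unp (2*d+5) (2*d+1) (2*d+3) (2*d+7)) s1 s2"
    "s2 (2*d+5) = code (dhd (wval \<sigma> a))" "s2 (2*d+1) = code (dtl (wval \<sigma> a))"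
    "\<forall>n. n \<noteq> 2*d+5 \<and> n \<noteq> 2*d+1 \<and> n \<noteq> 2*d+7 \<longrightarrow> s2 n = s1 n"
  proof -
    have e1: "2*(d+1)+1 = 2*d+3" by simp
    have s1': "s1 (2*d+3) = code (wval \<sigma> a)" using s1(2) unfolding e1 .
    have "distinct [2*d+5, 2*d+1, 2*d+3, 2*d+7]" by simp
    from unp_ok[where s=s1 and z="2*d+3", OF s1' this] show ?thesis using that by blast
  qed
  have P: "pexec (cexp (WTl a) d) sc s2"
    by (simp only: cexp.simps) (rule PSeq[OF s1(1) s2(1)])
  moreover have "\<forall>n. even n \<or> n < 2*d+1 \<longrightarrow> s2 n = sc n"
  proof (intro allI impI)
    fix n assume h: "even n \<or> n < 2*d+1"
    then have "n \<noteq> 2*d+1 \<and> n \<noteq> 2*d+5 \<and> n \<noteq> 2*d+7" by auto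
    then have "s2 n = s1 n" using s2(4) by blast
    moreover have "even n \<or> n < 2*(d+1)+1" using h by auto
    then have "s1 n = sc n" using s1(3) by blast
    ultimately show "s2 n = sc n" by simp
  qed
  ultimately show ?case using s2(3) wval_tl by (intro exI[of _ s2] conjI[OF P]) auto
qed

fun ccom :: "wcom \<Rightarrow> com" where
  "ccom (WAsg x e) = Seq (cexp e 0) (Assign (2*x) (Var 1))"
| "ccom (WSeq c1 c2) = Seq (ccom c1) (ccom c2)"
| "ccom (WWhile e c) = Seq (cexp e 0) (While (Var 1) (Seq (ccom c) (cexp e 0)))"

lemma cexp0: "rep sc \<sigma> \<Longrightarrow> \<exists>sc'. pexec (cexp e 0) sc sc' \<and> sc' 1 = code (wval \<sigma> e) \<and> rep sc' \<sigma>"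
proof -
  assume r: "rep sc \<sigma>"
  obtain sc' where a: "pexec (cexp e 0) sc sc'" "sc' (2*0+1) = code (wval \<sigma> e)"
    "\<forall>n. even n \<or> n < 2*0+1 \<longrightarrow> sc' n = sc n"
    using cexp_ok[OF r, of e 0] by blast
  have "rep sc' \<sigma>" using rep_frame[OF r] a(3) by blast
  moreover have "sc' 1 = code (wval \<sigma> e)" using a(2) by simp
  ultimately show ?thesis using a(1) by blast
qed

lemma ccom_ok:
  "wexec c \<sigma> \<sigma>' \<Longrightarrow>
    (\<forall>sc. rep sc \<sigma> \<longrightarrow> (\<exists>sc'. pexec (ccom c) sc sc' \<and> rep sc' \<sigma>')) \<and>
    (\<forall>e b. c = WWhile e b \<longrightarrow> (\<forall>sc. rep sc \<sigma> \<and> sc 1 = code (wval \<sigma> e) \<longrightarrow>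
        (\<exists>sc'. pexec (While (Var 1) (Seq (ccom b) (cexp e 0))) sc sc' \<and> rep sc' \<sigma>')))"
proof (induction rule: wexec.induct)
  case (1 x e \<sigma>)
  show ?case
  proof (intro conjI allI impI)
    fix sc assume r: "rep sc \<sigma>"
    obtain s1 where s1: "pexec (cexp e 0) sc s1" "s1 1 = code (wval \<sigma> e)" "rep s1 \<sigma>"
      using cexp0[OF r] by blast
    have A: "pexec (Assign (2*x) (Var 1)) s1 (s1(2*x := code (wval \<sigma> e)))"
      by (rule PAssign') (use s1 in auto)
    have R: "rep (s1(2*x := code (wval \<sigma> e))) (\<sigma>(x := wval \<sigma> e))"
      using s1(3) unfolding rep_def by auto
    have "pexec (ccom (WAsg x e)) sc (s1(2*x := code (wval \<sigma> e)))"
      unfolding ccom.simps by (rule PSeq[OF s1(1) A])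
    with R show "\<exists>sc'. pexec (ccom (WAsg x e)) sc sc' \<and> rep sc' (\<sigma>(x := wval \<sigma> e))"
      by blast
  qed simp
next
  case (2 c1 \<sigma> \<sigma>1 c2 \<sigma>2)
  show ?case
  proof (intro conjI allI impI)
    fix sc assume r: "rep sc \<sigma>"
    obtain s1 where a: "pexec (ccom c1) sc s1" "rep s1 \<sigma>1" using "2.IH"(1) r by blast
    obtain s2 where b: "pexec (ccom c2) s1 s2" "rep s2 \<sigma>2" using "2.IH"(2) a(2) by blast
    have "pexec (ccom (WSeq c1 c2)) sc s2" unfolding ccom.simps by (rule PSeq[OF a(1) b(1)])
    with b(2) show "\<exists>sc'. pexec (ccom (WSeq c1 c2)) sc sc' \<and> rep sc' \<sigma>2"
      by blast
  qed simp
next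
  case (3 \<sigma> e c)
  have W: "pexec (While (Var 1) (Seq (ccom c) (cexp e 0))) sc sc" if "sc 1 = code (wval \<sigma> e)" for sc
    by (rule PWhileF) (use that 3 in simp_all)
  show ?case
  proof (intro conjI allI impI)
    fix sc assume r: "rep sc \<sigma>"
    obtain s1 where s1: "pexec (cexp e 0) sc s1" "s1 1 = code (wval \<sigma> e)" "rep s1 \<sigma>"
      using cexp0[OF r] by blast
    have "pexec (ccom (WWhile e c)) sc s1" unfolding ccom.simps by (rule PSeq[OF s1(1) W[where sc=s1, OF s1(2)]])
    with s1(3) show "\<exists>sc'. pexec (ccom (WWhile e c)) sc sc' \<and> rep sc' \<sigma>" by blast
  next
    fix e' b sc assume "WWhile e c = WWhile e' b" "rep sc \<sigma> \<and> sc 1 = code (wval \<sigma> e')"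
    then show "\<exists>sc'. pexec (While (Var 1) (Seq (ccom b) (cexp e' 0))) sc sc' \<and> rep sc' \<sigma>"
      using W by auto
  qed
next
  case (4 \<sigma> e c \<sigma>1 \<sigma>2)
  have W: "\<exists>sc'. pexec (While (Var 1) (Seq (ccom c) (cexp e 0))) sc sc' \<and> rep sc' \<sigma>2"
    if r: "rep sc \<sigma>" and e: "sc 1 = code (wval \<sigma> e)" for sc
  proof -
    obtain s1 where s1: "pexec (ccom c) sc s1" "rep s1 \<sigma>1" using "4.IH"(1) r by blast
    obtain s2 where s2: "pexec (cexp e 0) s1 s2" "s2 1 = code (wval \<sigma>1 e)" "rep s2 \<sigma>1"
      using cexp0[OF s1(2)] by blast
    obtain s3 where s3: "pexec (While (Var 1) (Seq (ccom c) (cexp e 0))) s2 s3" "rep s3 \<sigma>2"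
      using "4.IH"(2) s2(2,3) by blast
    have "sc 1 > 0"
    proof (cases "wval \<sigma> e")
      case DNil then show ?thesis using "4.hyps"(1) by simp
    next
      case (DCons x y) then show ?thesis using e code_pos[of x y] by simp
    qed
    then have "ev sc (Var 1) \<noteq> 0" by simp
    then have "pexec (While (Var 1) (Seq (ccom c) (cexp e 0))) sc s3"
      by (intro PWhileT[OF _ _ PSeq[OF s1(1) s2(1)] s3(1)]) simp_all
    then show ?thesis using s3(2) by blast
  qed
  show ?case
  proof (intro conjI allI impI)
    fix sc assume r: "rep sc \<sigma>"
    obtain s1 where s1: "pexec (cexp e 0) sc s1" "s1 1 = code (wval \<sigma> e)" "rep s1 \<sigma>"
      using cexp0[OF r] by blast
    obtain s' where "pexec (While (Var 1) (Seq (ccom c) (cexp e 0))) s1 s'" "rep s' \<sigma>2"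
      using W[OF s1(3) s1(2)] by blast
    then have "pexec (ccom (WWhile e c)) sc s'" "rep s' \<sigma>2"
      unfolding ccom.simps by (blast intro: PSeq[OF s1(1)])+
    then show "\<exists>sc'. pexec (ccom (WWhile e c)) sc sc' \<and> rep sc' \<sigma>2" by blast
  next
    fix e' b sc assume "WWhile e c = WWhile e' b" "rep sc \<sigma> \<and> sc 1 = code (wval \<sigma> e')"
    then show "\<exists>sc'. pexec (While (Var 1) (Seq (ccom b) (cexp e' 0))) sc sc' \<and> rep sc' \<sigma>2"
      using W by auto
  qed
qed



definition encloop :: com where
  "encloop = While (Less (Num 0) (Var 7))
     (Seq (Assign 5 (PAIRE (Num 0) (Var 5))) (Assign 7 (Sub (Var 7) (Num 1))))"

lemma encloop_ok:
  "sc 7 = int k \<Longrightarrow> sc 5 = code (enc_nat m) \<Longrightarrow>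
   \<exists>sc'. pexec encloop sc sc' \<and> sc' 5 = code (enc_nat (m + k)) \<and> (\<forall>n. n \<noteq> 5 \<and> n \<noteq> 7 \<longrightarrow> sc' n = sc n)"
proof (induction k arbitrary: m sc)
  case 0
  have "pexec encloop sc sc" unfolding encloop_def by (rule PWhileF) (use 0 in simp_all)
  then show ?case using 0 by auto
next
  case (Suc k)
  let ?s1 = "sc(5 := code (enc_nat (Suc m)))"
  let ?s2 = "?s1(7 := int k)"
  have a1: "pexec (Assign 5 (PAIRE (Num 0) (Var 5))) sc ?s1"
    by (rule PAssign') (use Suc.prems in simp_all)
  have a2: "pexec (Assign 7 (Sub (Var 7) (Num 1))) ?s1 ?s2"
    by (rule PAssign') (use Suc.prems in simp_all)
  obtain s' where s': "pexec encloop ?s2 s'" "s' 5 = code (enc_nat (Suc m + k))"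
    "\<forall>n. n \<noteq> 5 \<and> n \<noteq> 7 \<longrightarrow> s' n = ?s2 n"
  proof -
    have p1: "?s2 7 = int k" by simp
    have p2: "?s2 5 = code (enc_nat (Suc m))" by simp
    show ?thesis using Suc.IH[OF p1 p2] that by blast
  qed
  have "pexec encloop sc s'"
    unfolding encloop_def
    by (rule PWhileT[OF _ _ PSeq[OF a1 a2] s'(1)[unfolded encloop_def]]) (use Suc.prems in simp_all)
  then show ?case using s'(2,3) by (intro exI[of _ s']) auto
qed

fun plugc :: "bool list \<Rightarrow> nat \<Rightarrow> com" where
  "plugc [] d = Assign (4*d+9) (Var 3)"
| "plugc (b # p) d = (if b then
      Seq (unp (4*d+11) (4*d+13) (4*d+9) 1) (Seq (plugc p (Suc d))
        (Assign (4*d+9) (PAIRE (Var (4*d+11)) (Var (4*d+13)))))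
    else
      Seq (unp (4*d+13) (4*d+11) (4*d+9) 1) (Seq (plugc p (Suc d))
        (Assign (4*d+9) (PAIRE (Var (4*d+13)) (Var (4*d+11))))))"

fun repl :: "D \<Rightarrow> bool list \<Rightarrow> D \<Rightarrow> D" where
  "repl t [] x = x"
| "repl t (b # p) x = (if b then DCons (dhd t) (repl (dtl t) p x) else DCons (repl (dhd t) p x) (dtl t))"

lemma plugc_ok:
  "sc (4*d+9) = code t \<Longrightarrow> sc 3 = code x \<Longrightarrow>
   \<exists>sc'. pexec (plugc p d) sc sc' \<and> sc' (4*d+9) = code (repl t p x) \<and>
     (\<forall>n. n \<noteq> 1 \<and> (even n \<or> n < 4*d+9) \<longrightarrow> sc' n = sc n)"
proof (induction p arbitrary: d sc t)
  case Nil
  have P: "pexec (plugc [] d) sc (sc(4*d+9 := code x))"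
    unfolding plugc.simps by (rule PAssign') (use Nil in simp_all)
  show ?case by (intro exI[of _ "sc(4*d+9 := code x)"] conjI[OF P]) auto
next
  case (Cons b p)
  have e: "4 * Suc d + 9 = 4*d+13" by simp
  show ?case
  proof (cases b)
    case True
    have dis: "distinct [4*d+11, 4*d+13, 4*d+9, 1]" by simp
    obtain s1 where s1: "pexec (unp (4*d+11) (4*d+13) (4*d+9) 1) sc s1"
      "s1 (4*d+11) = code (dhd t)" "s1 (4*d+13) = code (dtl t)"
      "\<forall>n. n \<noteq> 4*d+11 \<and> n \<noteq> 4*d+13 \<and> n \<noteq> 1 \<longrightarrow> s1 n = sc n"
      using unp_ok[where s=sc and z="4*d+9", OF Cons.prems(1) dis] by blast
    have h1: "s1 (4 * Suc d + 9) = code (dtl t)" using s1(3) unfolding e .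
    have h2: "s1 3 = code x" using s1(4) Cons.prems(2) by simp
    obtain s2 where s2: "pexec (plugc p (Suc d)) s1 s2" "s2 (4*d+13) = code (repl (dtl t) p x)"
      "\<forall>n. n \<noteq> 1 \<and> (even n \<or> n < 4*d+13) \<longrightarrow> s2 n = s1 n"
      using Cons.IH[OF h1 h2] unfolding e by blast
    have h3: "s2 (4*d+11) = code (dhd t)" using s2(3) s1(2) by simp
    let ?s3 = "s2(4*d+9 := code (repl t (b # p) x))"
    have a3: "pexec (Assign (4*d+9) (PAIRE (Var (4*d+11)) (Var (4*d+13)))) s2 ?s3"
      by (rule PAssign') (use True h3 s2(2) in simp_all)
    have P: "pexec (plugc (b # p) d) sc ?s3"
      unfolding plugc.simps if_P[OF True] by (rule PSeq[OF s1(1) PSeq[OF s2(1) a3]])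
    have F: "\<forall>n. n \<noteq> 1 \<and> (even n \<or> n < 4*d+9) \<longrightarrow> ?s3 n = sc n"
    proof (intro allI impI)
      fix n assume h: "n \<noteq> 1 \<and> (even n \<or> n < 4*d+9)"
      then have ne: "n \<noteq> 4*d+9" "n \<noteq> 4*d+11" "n \<noteq> 4*d+13" by auto
      have "n \<noteq> 1 \<and> (even n \<or> n < 4*d+13)" using h by auto
      then have "s2 n = s1 n" using s2(3) by blast
      moreover have "s1 n = sc n" using s1(4) ne h by blast
      ultimately show "?s3 n = sc n" using ne by simp
    qed
    show ?thesis by (intro exI[of _ ?s3] conjI[OF P]) (use F in simp_all)
  next
    case False
    have dis: "distinct [4*d+13, 4*d+11, 4*d+9, 1]" by simp
    obtain s1 where s1: "pexec (unp (4*d+13) (4*d+11) (4*d+9) 1) sc s1"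
      "s1 (4*d+13) = code (dhd t)" "s1 (4*d+11) = code (dtl t)"
      "\<forall>n. n \<noteq> 4*d+13 \<and> n \<noteq> 4*d+11 \<and> n \<noteq> 1 \<longrightarrow> s1 n = sc n"
      using unp_ok[where s=sc and z="4*d+9", OF Cons.prems(1) dis] by blast
    have h1: "s1 (4 * Suc d + 9) = code (dhd t)" using s1(2) unfolding e .
    have h2: "s1 3 = code x" using s1(4) Cons.prems(2) by simp
    obtain s2 where s2: "pexec (plugc p (Suc d)) s1 s2" "s2 (4*d+13) = code (repl (dhd t) p x)"
      "\<forall>n. n \<noteq> 1 \<and> (even n \<or> n < 4*d+13) \<longrightarrow> s2 n = s1 n"
      using Cons.IH[OF h1 h2] unfolding e by blast
    have h3: "s2 (4*d+11) = code (dtl t)" using s2(3) s1(3) by simp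
    let ?s3 = "s2(4*d+9 := code (repl t (b # p) x))"
    have a3: "pexec (Assign (4*d+9) (PAIRE (Var (4*d+13)) (Var (4*d+11)))) s2 ?s3"
      by (rule PAssign') (use False h3 s2(2) in simp_all)
    have P: "pexec (plugc (b # p) d) sc ?s3"
      unfolding plugc.simps if_not_P[OF False] by (rule PSeq[OF s1(1) PSeq[OF s2(1) a3]])
    have F: "\<forall>n. n \<noteq> 1 \<and> (even n \<or> n < 4*d+9) \<longrightarrow> ?s3 n = sc n"
    proof (intro allI impI)
      fix n assume h: "n \<noteq> 1 \<and> (even n \<or> n < 4*d+9)"
      then have ne: "n \<noteq> 4*d+9" "n \<noteq> 4*d+11" "n \<noteq> 4*d+13" by auto
      have "n \<noteq> 1 \<and> (even n \<or> n < 4*d+13)" using h by auto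
      then have "s2 n = s1 n" using s2(3) by blast
      moreover have "s1 n = sc n" using s1(4) ne h by blast
      ultimately show "?s3 n = sc n" using ne by simp
    qed
    show ?thesis by (intro exI[of _ ?s3] conjI[OF P]) (use F in simp_all)
  qed
qed



definition pathQ :: "bool list" where
  "pathQ = [True,True,True,False,False,True,True,True,True,False,False,True,True,True,False,
            True,False,True,True,False,True,False]"

definition restQ :: "wcom \<Rightarrow> com" where
  "restQ P = Seq (Assign 5 (Num 0)) (Seq (Assign 7 (Var 9)) (Seq encloop
     (Seq (Assign 3 (PAIRE (Num 1) (Var 5))) (Seq (plugc pathQ 0) (Seq (Assign 0 (Var 9)) (ccom P))))))"

definition bodyB :: "wcom \<Rightarrow> int \<Rightarrow> int \<Rightarrow> com" where
  "bodyB P N K = Seq (Assign 9 (Num N)) (Seq (restQ P) (Assign 1 (Equal (Var 2) (Num K))))"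

definition IJ :: iface where "IJ = Iface 0 [] []"
definition II :: iface where "II = Iface 1 [Proto 1 TInt []] []"
definition Li0 :: "iface list" where "Li0 = [IJ, II]"
definition c0 :: comp where
  "c0 = Comp 0 [0] [1] [FDef 0 [] (Seq (CallF 0 0 1 []) (Output (Var 0))) (Num 0)]"
definition cA :: "wcom \<Rightarrow> comp" where
  "cA P = Comp 1 [1] [] [FDef 1 [] (If (Num 0) (bodyB P 0 0) Skip) (Num 1)]"
definition SA :: "wcom \<Rightarrow> wtree" where "SA P = WNode c0 [WNode (cA P) []]"
definition KK :: "wcom \<Rightarrow> int" where "KK P = code (enc_wtree (SA P))"
definition cB :: "wcom \<Rightarrow> int \<Rightarrow> comp" where
  "cB P N = Comp 2 [1] [] [FDef 1 [] (bodyB P N (KK P)) (Var 1)]"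
definition SB :: "wcom \<Rightarrow> int \<Rightarrow> wtree" where "SB P N = WNode c0 [WNode (cB P N) []]"
definition Lc0 :: "wcom \<Rightarrow> int \<Rightarrow> comp list" where "Lc0 P N = [cB P N, c0, cA P]"
definition R0 :: "(bool list \<times> int) list" where "R0 = [([], 1)]"
definition instD :: "wcom \<Rightarrow> int \<Rightarrow> D" where
  "instD P N = enc_instance R0 Li0 (Lc0 P N) (SA P)"
definition N0 :: "wcom \<Rightarrow> int" where "N0 P = code (instD P 0)"

lemma repl_inst: "repl (instD P 0) pathQ (enc_int N) = instD P N"
  unfolding instD_def enc_instance_def Lc0_def cB_def bodyB_def pathQ_def
  by (simp add: tag_def enc_dl_def)

lemma N0_nonneg: "0 \<le> N0 P"
  unfolding N0_def by (rule code_nonneg)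

lemma code_enc_int: "0 \<le> N \<Longrightarrow> code (enc_int N) = (1 + code (enc_nat (nat N))) * (1 + code (enc_nat (nat N))) + code (enc_nat (nat N)) + 1"
  by (simp add: enc_int_def enc_bool_def)

lemma bodyB_run:
  assumes W: "wexec P (\<lambda>v. if v = 0 then instD P (N0 P) else DNil) \<sigma>'"
  shows "\<exists>s. pexec (bodyB P (N0 P) K) (\<lambda>_. 0) s \<and> s 1 = (if code (\<sigma>' 1) = K then 1 else 0)"
proof -
  define N where "N = N0 P"
  have N: "0 \<le> N" unfolding N_def by (rule N0_nonneg)
  define s1 where "s1 = (\<lambda>_::nat. 0::int)(9 := N)"
  define s2 where "s2 = s1(5 := 0)"
  define s3 where "s3 = s2(7 := N)"
  have a1: "pexec (Assign 9 (Num N)) (\<lambda>_. 0) s1" unfolding s1_def by (rule PAssign') simp_all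
  have a2: "pexec (Assign 5 (Num 0)) s1 s2" unfolding s2_def by (rule PAssign') simp_all
  have a3: "pexec (Assign 7 (Var 9)) s2 s3" unfolding s3_def by (rule PAssign') (simp_all add: s2_def s1_def)
  have p1: "s3 7 = int (nat N)" using N by (simp add: s3_def)
  have p2: "s3 5 = code (enc_nat 0)" by (simp add: s3_def s2_def)
  obtain s4 where s4: "pexec encloop s3 s4" "s4 5 = code (enc_nat (0 + nat N))"
    "\<forall>n. n \<noteq> 5 \<and> n \<noteq> 7 \<longrightarrow> s4 n = s3 n"
    using encloop_ok[OF p1 p2] by blast
  define s5 where "s5 = s4(3 := code (enc_int N))"
  have a5: "pexec (Assign 3 (PAIRE (Num 1) (Var 5))) s4 s5"
    unfolding s5_def by (rule PAssign') (simp_all add: code_enc_int[OF N] s4(2))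
  have q1: "s5 (4*0+9) = code (instD P 0)"
    using s4(3) by (simp add: s5_def s3_def s2_def s1_def N_def N0_def)
  have q2: "s5 3 = code (enc_int N)" by (simp add: s5_def)
  obtain s6 where s6: "pexec (plugc pathQ 0) s5 s6" "s6 (4*0+9) = code (repl (instD P 0) pathQ (enc_int N))"
    "\<forall>n. n \<noteq> 1 \<and> (even n \<or> n < 4*0+9) \<longrightarrow> s6 n = s5 n"
    using plugc_ok[OF q1 q2] by blast
  have s69: "s6 9 = code (instD P N)" using s6(2) repl_inst by simp
  define s7 where "s7 = s6(0 := code (instD P N))"
  have a7: "pexec (Assign 0 (Var 9)) s6 s7" unfolding s7_def by (rule PAssign') (simp_all add: s69)
  have r7: "rep s7 (\<lambda>v. if v = 0 then instD P (N0 P) else DNil)"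
    unfolding rep_def
  proof
    fix x :: nat
    show "s7 (2*x) = code (if x = 0 then instD P (N0 P) else DNil)"
    proof (cases "x = 0")
      case True then show ?thesis by (simp add: s7_def N_def)
    next
      case False
      have ev: "even (2*x)" by simp
      have "s7 (2*x) = s6 (2*x)" using False by (simp add: s7_def)
      also have "\<dots> = s5 (2*x)" using s6(3) ev by auto
      also have "\<dots> = s4 (2*x)" unfolding s5_def by (rule fun_upd_other) presburger
      also have "\<dots> = s3 (2*x)"
      proof -
        have "2*x \<noteq> 5 \<and> 2*x \<noteq> 7" by presburger
        then show ?thesis using s4(3) by blast
      qed
      also have "\<dots> = 0"
      proof -
        have "2*x \<noteq> 5 \<and> 2*x \<noteq> 7 \<and> 2*x \<noteq> 9" by presburger
        then show ?thesis by (simp add: s3_def s2_def s1_def)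
      qed
      finally show ?thesis using False by simp
    qed
  qed
  obtain s8 where s8: "pexec (ccom P) s7 s8" "rep s8 \<sigma>'"
    using ccom_ok[OF W] r7 by blast
  have s82: "s8 2 = code (\<sigma>' 1)" using s8(2) unfolding rep_def by (metis mult.right_neutral)
  define s9 where "s9 = s8(1 := (if code (\<sigma>' 1) = K then 1 else 0))"
  have a9: "pexec (Assign 1 (Equal (Var 2) (Num K))) s8 s9"
    unfolding s9_def by (rule PAssign') (simp_all add: s82)
  have "pexec (bodyB P (N0 P) K) (\<lambda>_. 0) s9"
    unfolding bodyB_def restQ_def N_def[symmetric]
    by (rule PSeq[OF a1 PSeq[OF PSeq[OF a2 PSeq[OF a3 PSeq[OF s4(1) PSeq[OF a5 PSeq[OF s6(1) PSeq[OF a7 s8(1)]]]]]] a9]])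
  then show ?thesis by (intro exI[of _ s9]) (simp add: s9_def)
qed



lemma iface_of_1: "iface_of Li0 1 = II"
  by (simp add: iface_of_def Li0_def IJ_def II_def)

lemma iface_of_0: "iface_of Li0 0 = IJ"
  by (simp add: iface_of_def Li0_def IJ_def II_def)

lemma funs_of_1: "c_funs X = [FDef 1 ps body re] \<Longrightarrow> funs_of Li0 (Some 1) X = [FDef 1 ps body re]"
  by (simp add: funs_of_def iface_of_1 II_def del: One_nat_def)

lemma run_sys:
  assumes X: "c_funs X = [FDef 1 [] body re]" and pr: "pure re" and B: "pexec body (\<lambda>_. 0) s"
  shows "exec Li0 [] [] None (WNode c0 [WNode X []]) (Seq (CallF 0 0 1 []) (Output (Var 0)))
           ((\<lambda>_. 0), (\<lambda>_ _. 0), (\<lambda>_ _. 0), [])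
           ((\<lambda>_. 0)(0 := ev s re), (\<lambda>_ _. 0), (\<lambda>_ _. 0), [ev s re])"
proof -
  have E: "exec Li0 [] ([] @ [0]) (Some (c_requires c0 ! 0)) ([WNode X []] ! 0) body
      (bind_params [] (map (aval [] [] ((\<lambda>_. 0), (\<lambda>_ _. 0), (\<lambda>_ _. 0), [])) []), \<lambda>_ _. 0, (\<lambda>_ _. 0), [])
      (s, (\<lambda>_ _. 0), (\<lambda>_ _. 0), [])"
    using pexec_exec[OF B, of Li0 "[]" "[0]" "Some 1" "WNode X []" "\<lambda>_ _. 0" "\<lambda>_ _. 0" "[]"]
    by (simp add: bind_params_def c0_def)
  have F: "find (\<lambda>d. fd_name d = 1) (funs_of Li0 (Some (c_requires c0 ! 0)) (w_comp ([WNode X []] ! 0)))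
      = Some (FDef 1 [] body re)"
    by (simp add: c0_def funs_of_1[OF X] del: One_nat_def)
  have C: "exec Li0 [] [] None (WNode c0 [WNode X []]) (CallF 0 0 1 [])
      ((\<lambda>_. 0), (\<lambda>_ _. 0), (\<lambda>_ _. 0), [])
      ((\<lambda>_. 0)(0 := aval [] ([] @ [0]) (s, (\<lambda>_ _. 0), (\<lambda>_ _. 0), []) re), (\<lambda>_ _. 0), (\<lambda>_ _. 0), [])"
    by (rule ExCall[OF refl refl _ _ refl F _ E refl]) (simp_all add: c0_def)
  have av: "aval [] ([] @ [0]) (s, (\<lambda>_ _. 0), (\<lambda>_ _. 0), []) re = ev s re"
    by (rule aval_pure[OF pr])
  have O: "exec Li0 [] [] None (WNode c0 [WNode X []]) (Output (Var 0))
      ((\<lambda>_. 0)(0 := ev s re), (\<lambda>_ _. 0), (\<lambda>_ _. 0), [])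
      ((\<lambda>_. 0)(0 := ev s re), (\<lambda>_ _. 0), (\<lambda>_ _. 0), [ev s re])"
  proof -
    let ?S = "((\<lambda>_. 0)(0 := ev s re), (\<lambda>_ _. 0), (\<lambda>_ _. 0), []) :: state"
    have "exec Li0 [] [] None (WNode c0 [WNode X []]) (Output (Var 0)) ?S
       ((\<lambda>_. 0)(0 := ev s re), (\<lambda>_ _. 0), (\<lambda>_ _. 0), [] @ [aval [] [] ?S (Var 0)])"
      by (rule ExOut) (rule refl)
    then show ?thesis by simp
  qed
  show ?thesis using ExSeq[OF C[unfolded av] O] .
qed

lemma main_c0: "find (\<lambda>d. fd_name d = main_name) (c_funs c0) =
   Some (FDef main_name [] (Seq (CallF 0 0 1 []) (Output (Var 0))) (Num 0))"
  by (simp add: c0_def main_name_def)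

lemma runs_sys:
  assumes "c_funs X = [FDef 1 [] body re]" "pure re" "pexec body (\<lambda>_. 0) s"
  shows "runs_output Li0 (WNode c0 [WNode X []]) [] (ev s re)"
  unfolding runs_output_def using main_c0 run_sys[OF assms] by fastforce

lemma not_runs_sys:
  assumes "c_funs X = [FDef 1 [] body re]" "pure re" "pexec body (\<lambda>_. 0) s" "out \<noteq> ev s re"
  shows "\<not> runs_output Li0 (WNode c0 [WNode X []]) [] out"
proof
  assume "runs_output Li0 (WNode c0 [WNode X []]) [] out"
  then obtain ps body' re' s' where a:
    "find (\<lambda>d. fd_name d = main_name) (c_funs c0) = Some (FDef main_name ps body' re')"
    "exec Li0 [] [] None (WNode c0 [WNode X []]) body' ((\<lambda>_. 0), (\<lambda>_ _. 0), (\<lambda>_ _. 0), []) s'"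
    "snd (snd (snd s')) = [out]"
    unfolding runs_output_def by auto
  have "body' = Seq (CallF 0 0 1 []) (Output (Var 0))" using a(1) main_c0 by simp
  then have E: "exec Li0 [] [] None (WNode c0 [WNode X []]) (Seq (CallF 0 0 1 []) (Output (Var 0)))
      ((\<lambda>_. 0), (\<lambda>_ _. 0), (\<lambda>_ _. 0), []) s'" using a(2) by simp
  have "s' = ((\<lambda>_. 0)(0 := ev s re), (\<lambda>_ _. 0), (\<lambda>_ _. 0), [ev s re])"
    using exec_det[OF E run_sys[OF assms(1-3)]] .
  then show False using a(3) assms(4) by simp
qed



lemma c0_req: "c_requires c0 = [1]" by (simp add: c0_def)
lemma cA_ne: "cA P \<noteq> c0" by (simp add: cA_def c0_def)
lemma cB_ne: "cB P N \<noteq> c0" by (simp add: cB_def c0_def)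
lemma cA_req: "c_requires (cA P) = []" by (simp add: cA_def)
lemma cB_req: "c_requires (cB P N) = []" by (simp add: cB_def)

lemma valid_cases:
  assumes "system_based (Lc0 P N) c0 S'"
  shows "S' = SA P \<or> S' = SB P N"
proof -
  obtain c ks where S: "S' = WNode c ks" by (cases S')
  from assms have c: "c = c0" and v: "validT (Lc0 P N) [] None (WNode c ks)"
    unfolding system_based_def S by auto
  from v c c0_req have vs: "validTs (Lc0 P N) [c0] [1] ks" by simp
  then obtain t ts where ks: "ks = t # ts" by (cases ks) auto
  from vs ks have vt: "validT (Lc0 P N) [c0] (Some 1) t" and vts: "validTs (Lc0 P N) [c0] [] ts" by auto
  from vts have ts: "ts = []" by (cases ts) auto
  obtain X ks' where t: "t = WNode X ks'" by (cases t)
  from vt t have X: "X \<in> set (Lc0 P N)" "X \<noteq> c0" and v2: "validTs (Lc0 P N) (X # [c0]) (c_requires X) ks'"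
    by auto
  from X have XX: "X = cB P N \<or> X = cA P" by (auto simp: Lc0_def)
  then have "c_requires X = []" using cA_req cB_req by auto
  with v2 have "ks' = []" by (cases ks') auto
  then show ?thesis using XX S c ks ts t by (auto simp: SA_def SB_def)
qed

lemma valid_SA: "system_based (Lc0 P N) c0 (SA P)"
  by (simp add: system_based_def SA_def Lc0_def cA_ne cA_req c0_req) (simp add: cA_def)

lemma valid_SB: "system_based (Lc0 P N) c0 (SB P N)"
  by (simp add: system_based_def SB_def Lc0_def cB_ne cB_req c0_req) (simp add: cB_def)

lemma cost_gen:
  assumes "c_funs X = [FDef 1 [] body re]" "c_requires X = []"
  shows "Rew_CodeB Li0 (WNode c0 [WNode X []]) = loc_copy Li0 None c0 + loc_iface (iface_of Li0 1) + 3 + loc_com body"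
  using assms by (simp add: Rew_CodeB_def c0_req loc_copy_def funs_of_1 loc_fdef_def del: One_nat_def)

lemma cost_lt: "Rew_CodeB Li0 (SB P N) < Rew_CodeB Li0 (SA P)"
proof -
  have a: "c_funs (cA P) = [FDef 1 [] (If (Num 0) (bodyB P 0 0) Skip) (Num 1)]" by (simp add: cA_def)
  have b: "c_funs (cB P N) = [FDef 1 [] (bodyB P N (KK P)) (Var 1)]" by (simp add: cB_def)
  show ?thesis
    unfolding SA_def SB_def cost_gen[OF a cA_req] cost_gen[OF b cB_req]
    by (simp add: bodyB_def)
qed

lemma bodyA_run: "pexec (If (Num 0) (bodyB P 0 0) Skip) (\<lambda>_. 0) (\<lambda>_. 0)"
  by (rule PIfF) (simp_all add: PSkip)

lemma working_SA: "working R0 Li0 (SA P)"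
proof -
  have a: "c_funs (cA P) = [FDef 1 [] (If (Num 0) (bodyB P 0 0) Skip) (Num 1)]" by (simp add: cA_def)
  have "runs_output Li0 (SA P) [] (ev (\<lambda>_. 0) (Num 1))"
    unfolding SA_def by (rule runs_sys[OF a _ bodyA_run]) simp
  then show ?thesis by (simp add: working_def R0_def)
qed

lemma wf_inst: "wf_libs Li0 (Lc0 P N)"
  by (simp add: wf_libs_def Li0_def IJ_def II_def Lc0_def c0_def cA_def cB_def iface_of_def)

lemma inst_ok: "esadapt_instance R0 Li0 (Lc0 P N) (SA P)"
  unfolding esadapt_instance_def
proof (intro conjI)
  show "wf_libs Li0 (Lc0 P N)" by (rule wf_inst)
  show "\<exists>nX. \<forall>(i, out)\<in>set R0. length i = nX" by (intro exI[of _ 0]) (simp add: R0_def)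
  show "system_based (Lc0 P N) (w_comp (SA P)) (SA P)" using valid_SA by (simp add: SA_def)
  show "working R0 Li0 (SA P)" by (rule working_SA)
qed

lemma enc_ne: "enc_wtree (SB P N) \<noteq> enc_wtree (SA P)"
  by (simp add: SA_def SB_def cA_def cB_def tag_def enc_dl_def)

theorem mainTheorem16:
  fixes Env :: "wtree \<Rightarrow> 'ev"
  shows "\<not> (\<exists>P. solves_ESAdapt_codeB P)"
proof
  assume "\<exists>P. solves_ESAdapt_codeB P"
  then obtain P where sP: "solves_ESAdapt_codeB P" by blast
  define N where "N = N0 P"
  obtain S' where sol: "esadapt_codeB_solution R0 Li0 (Lc0 P N) (SA P) S'"
    and wc: "wcomputes P (enc_instance R0 Li0 (Lc0 P N) (SA P)) (enc_wtree S')"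
    using sP inst_ok unfolding solves_ESAdapt_codeB_def by blast
  have wc0: "c0 = w_comp (SA P)" by (simp add: SA_def)
  from sol have sb: "system_based (Lc0 P N) c0 S'" and wk: "working R0 Li0 S'"
    and mn: "\<And>S''. system_based (Lc0 P N) c0 S'' \<Longrightarrow> working R0 Li0 S'' \<Longrightarrow>
               Rew_CodeB Li0 S' \<le> Rew_CodeB Li0 S''"
    unfolding esadapt_codeB_solution_def wc0 by auto
  from wc obtain \<sigma>' where W: "wexec P (\<lambda>v. if v = 0 then instD P (N0 P) else DNil) \<sigma>'"
    and out: "\<sigma>' 1 = enc_wtree S'"
    unfolding wcomputes_def instD_def N_def by auto
  obtain s where run: "pexec (bodyB P (N0 P) (KK P)) (\<lambda>_. 0) s"
    and s1: "s 1 = (if code (\<sigma>' 1) = KK P then 1 else 0)"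
    using bodyB_run[OF W, of "KK P"] by blast
  have b: "c_funs (cB P N) = [FDef 1 [] (bodyB P (N0 P) (KK P)) (Var 1)]" by (simp add: cB_def N_def)
  from valid_cases[OF sb] show False
  proof
    assume SA: "S' = SA P"
    then have "s 1 = 1" using s1 out by (simp add: KK_def)
    then have "runs_output Li0 (SB P N) [] 1"
      using runs_sys[OF b _ run] by (simp add: SB_def)
    then have "working R0 Li0 (SB P N)" by (simp add: working_def R0_def)
    then have "Rew_CodeB Li0 S' \<le> Rew_CodeB Li0 (SB P N)" using mn valid_SB by blast
    then show False using cost_lt[of P N] SA by simp
  next
    assume SB: "S' = SB P N"
    have "code (\<sigma>' 1) \<noteq> KK P" using out SB enc_ne code_inj unfolding KK_def by metis
    then have "s 1 = 0" using s1 by simp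
    then have "\<not> runs_output Li0 (SB P N) [] 1"
      unfolding SB_def by (rule_tac not_runs_sys[OF b _ run]) simp_all
    moreover have "runs_output Li0 (SB P N) [] 1" using wk SB by (simp add: working_def R0_def)
    ultimately show False by simp
  qed
qed

end
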